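(* Let $\varphi(t)=(t^{v_0},y(t))$ with $y(t)=t^{v_1}+t^\lambda+\sum_{i>\lambda}a_it^i$ be a Puiseux parametrization of genus $g\ge2$ with $n_1=2$, where $\lambda$ is the Zariski invariant of $\varphi$. Then there exists $y_1(t)=t^{v_1}+t^\lambda+\sum_{i>\lambda}a'_it^i$ with $a'_i=a_i$ for all $i<v_1+\lambda-v_0$ and $a'_{v_1+\lambda-v_0}=0$, such that $(t^{v_0},y_1(t))\sim_{\widetilde{\mathcal A}}(t^{v_0},y(t))$.
   Context: A Puiseux parametrization is a primitive parametrization $(t^{v_0},\sum_{i\ge v_1}a_it^i)$ with $a_{v_1}=1$, $v_0<v_1$, $v_0\nmid v_1$. Its semigroup of values $\Gamma_\varphi=\{\mathrm{ord}_t h(\varphi(t)): h\in\mathbb C\{X,Y\},\ h(\varphi)\ne0\}$ has minimal generators $v_0<v_1<\dots<v_g$; $g$ is the genus. $n_1=v_0/\gcd(v_0,v_1)$. For $\omega=h\,dX+g\,dY$, $v_\varphi(\omega)=\mathrm{ord}_t(h(\varphi)x'+g(\varphi)y')+1$, $\Lambda_\varphi$ is the set of these values (nonzero pull-backs), and the Zariski invariant is $\lambda=\min(\Lambda_\varphi\setminus\Gamma_\varphi)-v_0$ (assumed to exist). $\widetilde{\mathcal A}$-equivalence: $\varphi_2=\sigma\circ\varphi_1\circ\rho^{-1}$ where $\sigma$ is a germ of analytic automorphism of $(\mathbb C^2,0)$ whose 1-jet is $(X+\beta Y,Y)$ for some $\beta\in\mathbb C$, and $\rho$ a germ of analytic automorphism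 of $(\mathbb C,0)$ whose 1-jet is the identity. *)

theory Defs
  imports Complex_Main "HOL-Computational_Algebra.Formal_Power_Series"
begin

text \<open>Univariate series in t are complex formal power series; convergence
  (membership in C{t}) is a geometric bound on the coefficients.\<close>
definition conv1 :: "complex fps \<Rightarrow> bool" where
  "conv1 f \<longleftrightarrow> (\<exists>r>0. \<exists>M. \<forall>n. norm (fps_nth f n) * r ^ n \<le> M)"

text \<open>A bivariate series h = sum c i j X^i Y^j in C{X,Y} is given by its
  coefficient function c.\<close>
definition conv2 :: "(nat \<Rightarrow> nat \<Rightarrow> complex) \<Rightarrow> bool" where
  "conv2 c \<longleftrightarrow> (\<exists>r>0. \<exists>M. \<forall>i j. norm (c i j) * r ^ (i + j) \<le> M)"

text \<open>Substitution h(x(t),y(t)) for x, y without constant term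
  (only the terms with i + j \<le> n contribute to the coefficient of t^n).\<close>
definition comp2 :: "(nat \<Rightarrow> nat \<Rightarrow> complex) \<Rightarrow> complex fps \<Rightarrow> complex fps \<Rightarrow> complex fps" where
  "comp2 c x y = Abs_fps (\<lambda>n. \<Sum>i\<le>n. \<Sum>j\<le>n - i. c i j * fps_nth (x ^ i * y ^ j) n)"

definition primitive :: "complex fps \<Rightarrow> complex fps \<Rightarrow> bool" where
  "primitive x y \<longleftrightarrow>
     \<not> (\<exists>k\<ge>2. \<forall>n. \<not> k dvd n \<longrightarrow> fps_nth x n = 0 \<and> fps_nth y n = 0)"

definition puiseux_param :: "nat \<Rightarrow> nat \<Rightarrow> complex fps \<Rightarrow> bool" where
  "puiseux_param v0 v1 y \<longleftrightarrow>
     conv1 y \<and> (\<forall>i<v1. fps_nth y i = 0) \<and> fps_nth y v1 = 1 \<and> v0 < v1 \<and> \<not> v0 dvd v1 \<and>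
     primitive (fps_X ^ v0) y"

definition Gamma :: "complex fps \<Rightarrow> complex fps \<Rightarrow> nat set" where
  "Gamma x y = {subdegree (comp2 c x y) | c. conv2 c \<and> comp2 c x y \<noteq> 0}"

definition Lambda :: "complex fps \<Rightarrow> complex fps \<Rightarrow> nat set" where
  "Lambda x y = {subdegree (comp2 h x y * fps_deriv x + comp2 g x y * fps_deriv y) + 1 | h g.
       conv2 h \<and> conv2 g \<and> comp2 h x y * fps_deriv x + comp2 g x y * fps_deriv y \<noteq> 0}"

definition min_gens :: "nat set \<Rightarrow> nat set" where
  "min_gens S = {v \<in> S. v \<noteq> 0 \<and>
      \<not> (\<exists>a\<in>S. \<exists>b\<in>S. a \<noteq> 0 \<and> b \<noteq> 0 \<and> v = a + b)}"

definition genus :: "complex fps \<Rightarrow> complex fps \<Rightarrow> nat" where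
  "genus x y = card (min_gens (Gamma x y)) - 1"

definition zariski_exists :: "complex fps \<Rightarrow> complex fps \<Rightarrow> bool" where
  "zariski_exists x y \<longleftrightarrow> Lambda x y - Gamma x y \<noteq> {}"

definition zariski_inv :: "nat \<Rightarrow> complex fps \<Rightarrow> complex fps \<Rightarrow> nat" where
  "zariski_inv v0 x y = (LEAST n. n \<in> Lambda x y - Gamma x y) - v0"

text \<open>A-tilde equivalence: (x2,y2) = sigma o (x1,y1) o rho^{-1}, written
  equivalently as (x2,y2) o rho = sigma o (x1,y1); sigma has 1-jet (X + beta Y, Y),
  rho has 1-jet t; both convergent (hence analytic automorphism germs).\<close>
definition A_equiv :: "complex fps \<times> complex fps \<Rightarrow> complex fps \<times> complex fps \<Rightarrow> bool" where
  "A_equiv p q \<longleftrightarrow>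
    (\<exists>s1 s2 rho \<beta>. conv2 s1 \<and> conv2 s2 \<and> conv1 rho \<and>
       s1 0 0 = 0 \<and> s1 1 0 = 1 \<and> s1 0 1 = \<beta> \<and>
       s2 0 0 = 0 \<and> s2 1 0 = 0 \<and> s2 0 1 = 1 \<and>
       fps_nth rho 0 = 0 \<and> fps_nth rho 1 = 1 \<and>
       fst q oo rho = comp2 s1 (fst p) (snd p) \<and>
       snd q oo rho = comp2 s2 (fst p) (snd p))"

end

theory Submission
  imports Defs
begin

unbundle fps_syntax


lemma conv1_bound: "conv1 f \<Longrightarrow> \<exists>r>0. \<exists>M\<ge>0. \<forall>n. norm (fps_nth f n) * r ^ n \<le> M"
  unfolding conv1_def by (metis (no_types) norm_ge_zero order_trans power_0 mult_nonneg_nonneg zero_le_power less_imp_le mult.right_neutral)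

lemma geom2_le: "(\<Sum>i=0..n. (2::real) ^ (n - i)) + 1 \<le> 2 ^ Suc n"
proof (induction n)
  case 0 then show ?case by simp
next
  case (Suc n)
  have "(\<Sum>i=0..Suc n. (2::real) ^ (Suc n - i)) = (\<Sum>i=0..n. 2 ^ (Suc n - i)) + 1"
    by simp
  also have "(\<Sum>i=0..n. (2::real) ^ (Suc n - i)) = 2 * (\<Sum>i=0..n. 2 ^ (n - i))"
    by (simp add: sum_distrib_left Suc_diff_le flip: power_Suc)
  finally show ?case using Suc by simp
qed

lemma pow_bound:
  fixes g :: "complex fps"
  assumes b: "b > 0" and B: "B \<ge> 0" and gb: "\<And>n. norm (g $ n) * b ^ n \<le> B"
  shows "norm ((g ^ k) $ n) * b ^ n \<le> B ^ k * 2 ^ (n + k)"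
proof (induction k arbitrary: n)
  case 0 then show ?case by simp
next
  case (Suc k)
  have "norm ((g ^ Suc k) $ n) * b ^ n = norm (\<Sum>i=0..n. g $ i * (g ^ k) $ (n - i)) * b ^ n"
    by (simp add: fps_mult_nth)
  also have "\<dots> \<le> (\<Sum>i=0..n. norm (g $ i) * norm ((g ^ k) $ (n - i))) * b ^ n"
    by (intro mult_right_mono) (auto intro: order_trans[OF norm_sum] simp: norm_mult b less_imp_le)
  also have "\<dots> = (\<Sum>i=0..n. (norm (g $ i) * b ^ i) * (norm ((g ^ k) $ (n - i)) * b ^ (n - i)))"
    by (auto simp: sum_distrib_right intro!: sum.cong simp flip: power_add)
  also have "\<dots> \<le> (\<Sum>i=0..n. B * (B ^ k * 2 ^ (n - i + k)))"
    by (intro sum_mono mult_mono gb Suc.IH) (auto simp: B b less_imp_le)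
  also have "\<dots> = B ^ Suc k * 2 ^ k * (\<Sum>i=0..n. 2 ^ (n - i))"
    by (subst sum_distrib_left, rule sum.cong, simp, simp only: power_add, simp add: mult_ac)
  also have "\<dots> \<le> B ^ Suc k * 2 ^ k * 2 ^ Suc n"
    using geom2_le[of n] by (intro mult_left_mono) (auto simp: B)
  finally show ?case by (simp add: power_add mult_ac)
qed

lemma conv1_compose:
  fixes f g :: "complex fps"
  assumes f: "conv1 f" and g: "conv1 g"
  shows "conv1 (f oo g)"
proof -
  obtain a A where a_pos: "a > 0" and A0: "A \<ge> 0" and fa: "\<And>n. norm (f $ n) * a ^ n \<le> A"
    using conv1_bound[OF f] by blast
  obtain b B where b_pos: "b > 0" and B0: "B \<ge> 0" and gb: "\<And>n. norm (g $ n) * b ^ n \<le> B"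
    using conv1_bound[OF g] by blast
  define K where "K = max 1 (2 * B / a)"
  have K1: "K \<ge> 1" by (simp add: K_def)
  define r where "r = b / (4 * K)"
  have r: "r > 0" using b_pos K1 by (simp add: r_def)
  have fk: "norm (f $ k) \<le> A / a ^ k" for k
    using fa[of k] a_pos by (simp add: field_simps)
  have gk: "norm ((g ^ k) $ n) \<le> B ^ k * 2 ^ (n + k) / b ^ n" for k n
    using pow_bound[OF b_pos B0 gb, of k n] b_pos by (simp add: field_simps)
  have "norm ((f oo g) $ n) * r ^ n \<le> A" for n
  proof -
    have "norm ((f oo g) $ n) \<le> (\<Sum>k=0..n. norm (f $ k) * norm ((g ^ k) $ n))"
      by (simp add: fps_compose_nth) (auto intro: order_trans[OF norm_sum] simp: norm_mult)
    also have "\<dots> \<le> (\<Sum>k=0..n. (A / a ^ k) * (B ^ k * 2 ^ (n + k) / b ^ n))"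
      by (intro sum_mono mult_mono fk gk) (use a_pos A0 in \<open>auto intro!: divide_nonneg_pos\<close>)
    also have "\<dots> = (\<Sum>k=0..n. A * (2 * B / a) ^ k * (2 ^ n / b ^ n))"
      by (intro sum.cong) (auto simp: power_add power_divide power_mult_distrib field_simps)
    also have "\<dots> \<le> (\<Sum>k=0..n. A * K ^ n * (2 ^ n / b ^ n))"
    proof (intro sum_mono mult_right_mono mult_left_mono)
      fix k assume "k \<in> {0..n}"
      have "(2 * B / a) ^ k \<le> K ^ k" by (intro power_mono) (auto simp: K_def a_pos b_pos B0 intro!: divide_nonneg_pos)
      also have "\<dots> \<le> K ^ n" using \<open>k \<in> {0..n}\<close> K1 by (intro power_increasing) auto
      finally show "(2 * B / a) ^ k \<le> K ^ n" .
    qed (use a_pos b_pos A0 in auto)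
    also have "\<dots> = real (Suc n) * A * K ^ n * 2 ^ n / b ^ n" by simp
    also have "\<dots> \<le> 2 ^ n * A * K ^ n * 2 ^ n / b ^ n"
    proof -
      have "real (Suc n) \<le> 2 ^ n"
      proof (induction n)
        case (Suc n) then show ?case by simp
      qed simp
      then show ?thesis using a_pos b_pos K1 A0
        by (intro divide_right_mono mult_right_mono) auto
    qed
    also have "\<dots> = A / r ^ n"
    proof -
      have 4: "(4::real) ^ n = 2 ^ n * 2 ^ n" by (metis power_mult_distrib num_double numeral_times_numeral)
      show ?thesis using r b_pos K1 by (simp add: r_def power_divide power_mult_distrib 4)
    qed
    finally show ?thesis using r by (simp add: field_simps)
  qed
  then show ?thesis unfolding conv1_def using r by blast
qed



lemma gbinomial_norm_le1:
  fixes a :: real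
  assumes "0 \<le> a" "a \<le> 1"
  shows "norm ((complex_of_real a) gchoose k) \<le> 1"
proof (induction k)
  case 0 then show ?case by simp
next
  case (Suc k)
  have eq: "of_nat (Suc k) * (complex_of_real a gchoose Suc k) = (complex_of_real a - of_nat k) * (complex_of_real a gchoose k)"
    using gbinomial_mult_1[of "complex_of_real a" k] by (simp add: algebra_simps)
  have "norm (complex_of_real a - of_nat k) = \<bar>a - real k\<bar>"
    by (metis norm_of_real of_real_diff of_real_of_nat_eq)
  also have "\<dots> \<le> real (Suc k)" using assms by auto
  finally have n1: "norm (complex_of_real a - of_nat k) \<le> real (Suc k)" .
  have "real (Suc k) * norm (complex_of_real a gchoose Suc k) = norm (of_nat (Suc k) * (complex_of_real a gchoose Suc k))"
    by (simp only: norm_mult norm_of_nat)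
  also have "\<dots> = norm ((complex_of_real a - of_nat k) * (complex_of_real a gchoose k))"
    by (simp only: eq)
  also have "\<dots> \<le> real (Suc k) * 1"
    unfolding norm_mult by (intro mult_mono n1 Suc.IH) auto
  finally show ?case by simp
qed

lemma conv1_binomial:
  fixes a :: real
  assumes "0 \<le> a" "a \<le> 1"
  shows "conv1 (fps_binomial (complex_of_real a))"
  unfolding conv1_def using gbinomial_norm_le1[OF assms]
  by (intro exI[of _ 1]) auto

lemma conv1_cmult: "conv1 f \<Longrightarrow> conv1 (fps_const c * f)"
  unfolding conv1_def
proof (elim exE conjE)
  fix r M assume r: "r > 0" and M: "\<forall>n. norm (f $ n) * r ^ n \<le> M"
  show "\<exists>r>0. \<exists>M. \<forall>n. norm ((fps_const c * f) $ n) * r ^ n \<le> M"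
    using r M by (intro exI[of _ r] conjI exI[of _ "norm c * M"]) 
      (auto simp: norm_mult mult.assoc intro: mult_left_mono)
qed

lemma conv1_shift: "conv1 f \<Longrightarrow> conv1 (fps_shift k f)"
  unfolding conv1_def
proof (elim exE conjE)
  fix r M assume r: "r > 0" and M: "\<forall>n. norm (f $ n) * r ^ n \<le> M"
  have "norm (f $ (n + k)) * r ^ n \<le> M / r ^ k" for n
    using M[rule_format, of "n+k"] r by (simp add: field_simps power_add)
  then show "\<exists>r>0. \<exists>M. \<forall>n. norm (fps_shift k f $ n) * r ^ n \<le> M"
    using r by auto
qed

lemma conv1_X_mult: "conv1 f \<Longrightarrow> conv1 (fps_X * f)"
  unfolding conv1_def
proof (elim exE conjE)
  fix r M assume r: "r > 0" and M: "\<forall>n. norm (f $ n) * r ^ n \<le> M"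
  have "norm ((fps_X * f) $ n) * r ^ n \<le> \<bar>M\<bar> * r" for n
  proof (cases n)
    case 0 then show ?thesis using r by simp
  next
    case (Suc n')
    then show ?thesis using M[rule_format, of n'] r
      by (simp add: fps_X_mult_nth mult.commute mult_left_mono)
  qed
  then show "\<exists>r>0. \<exists>M. \<forall>n. norm ((fps_X * f) $ n) * r ^ n \<le> M"
    using r by blast
qed

lemma conv2_finite:
  assumes "\<And>i j. N < i + j \<Longrightarrow> c i j = 0"
  shows "conv2 c"
proof -
  have b: "norm (c i j) * 1 ^ (i + j) \<le> (\<Sum>i\<le>N. \<Sum>j\<le>N. norm (c i j))" for i j
  proof (cases "i + j \<le> N")
    case True
    have "norm (c i j) \<le> (\<Sum>j\<le>N. norm (c i j))"
      using True by (intro member_le_sum) auto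
    also have "\<dots> \<le> (\<Sum>i\<le>N. \<Sum>j\<le>N. norm (c i j))"
      using True by (intro member_le_sum[of i "{..N}" "\<lambda>i. \<Sum>j\<le>N. norm (c i j)"]) (auto intro: sum_nonneg)
    finally show ?thesis by simp
  next
    case False then show ?thesis using assms by (auto intro!: sum_nonneg)
  qed
  show ?thesis unfolding conv2_def
    by (rule exI[of _ "1::real"], rule conjI, simp, rule exI, rule allI, rule allI, rule b)
qed

definition mono2 :: "nat \<Rightarrow> nat \<Rightarrow> complex \<Rightarrow> nat \<Rightarrow> nat \<Rightarrow> complex" where
  "mono2 p q c = (\<lambda>i j. if i = p \<and> j = q then c else 0)"

lemma X_factor: "(f :: complex fps) $ 0 = 0 \<Longrightarrow> f = fps_X * fps_shift 1 f"
  apply (rule fps_ext) subgoal for n by (cases n) (auto simp: fps_X_mult_nth) done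

lemma prod_pow_nth_zero:
  fixes x y :: "complex fps"
  assumes "x $ 0 = 0" "y $ 0 = 0" "n < p + q"
  shows "(x ^ p * y ^ q) $ n = 0"
proof -
  have "x ^ p * y ^ q = fps_X ^ (p + q) * ((fps_shift 1 x) ^ p * (fps_shift 1 y) ^ q)"
  proof -
    have "x ^ p * y ^ q = (fps_X * fps_shift 1 x) ^ p * (fps_X * fps_shift 1 y) ^ q"
      using X_factor[OF assms(1)] X_factor[OF assms(2)] by simp
    also have "\<dots> = fps_X ^ p * fps_X ^ q * ((fps_shift 1 x) ^ p * (fps_shift 1 y) ^ q)"
      by (simp only: power_mult_distrib mult_ac)
    finally show ?thesis by (simp only: power_add)
  qed
  then show ?thesis using assms(3) by (simp add: fps_X_power_mult_nth)
qed

lemma comp2_mono2: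
  fixes x y :: "complex fps"
  assumes "x $ 0 = 0" "y $ 0 = 0"
  shows "comp2 (mono2 p q c) x y = fps_const c * x ^ p * y ^ q"
proof (rule fps_ext)
  fix n
  show "comp2 (mono2 p q c) x y $ n = (fps_const c * x ^ p * y ^ q) $ n"
  proof (cases "p + q \<le> n")
    case True
    have inner: "(\<Sum>j\<le>n - i. (if i = p \<and> j = q then c else 0) * (x ^ i * y ^ j) $ n)
        = (if i = p then c * (x ^ p * y ^ q) $ n else 0)" if "i \<le> n" for i
    proof (cases "i = p")
      case True
      then have "(\<Sum>j\<le>n - i. (if i = p \<and> j = q then c else 0) * (x ^ i * y ^ j) $ n)
          = (\<Sum>j\<le>n - i. if j = q then c * (x ^ p * y ^ q) $ n else 0)"
        by (intro sum.cong) auto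
      also have "\<dots> = c * (x ^ p * y ^ q) $ n" using \<open>p + q \<le> n\<close> True by (subst sum.delta) auto
      finally show ?thesis using True by simp
    qed simp
    have "comp2 (mono2 p q c) x y $ n = (\<Sum>i\<le>n. if i = p then c * (x ^ p * y ^ q) $ n else 0)"
      unfolding comp2_def mono2_def fps_nth_Abs_fps using inner by (intro sum.cong) auto
    also have "\<dots> = c * (x ^ p * y ^ q) $ n" using True by (subst sum.delta) auto
    finally show ?thesis by (simp add: mult.assoc)
  next
    case False
    have "comp2 (mono2 p q c) x y $ n = 0"
      unfolding comp2_def mono2_def using False by (auto intro!: sum.neutral)
    then show ?thesis using prod_pow_nth_zero[OF assms, of n p q] False by (simp add: mult.assoc)
  qed
qed

lemma comp2_sum:
  assumes "finite A"
  shows "comp2 (\<lambda>i j. \<Sum>a\<in>A. f a i j) x y = (\<Sum>a\<in>A. comp2 (f a) x y)"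
  by (rule fps_ext) (simp add: comp2_def fps_sum_nth sum_distrib_right sum.swap[of _ A])

lemma comp2_add:
  "comp2 (\<lambda>i j. f i j + g i j) x y = comp2 f x y + comp2 g x y"
  by (rule fps_ext) (simp add: comp2_def distrib_right sum.distrib)

lemma compose_poly:
  fixes U b :: "complex fps"
  assumes "\<And>k. N < k \<Longrightarrow> U $ k = 0" "b $ 0 = 0"
  shows "U oo b = (\<Sum>k=0..N. fps_const (U $ k) * b ^ k)"
proof (rule fps_ext)
  fix n
  have z: "(b ^ k) $ n = 0" if "n < k" for k
    using prod_pow_nth_zero[OF assms(2) assms(2), of n k 0] that by simp
  have "(U oo b) $ n = (\<Sum>k=0..max n N. U $ k * (b ^ k) $ n)"
    unfolding fps_compose_nth using assms(1) z
    by (intro sum.mono_neutral_left) auto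
  also have "\<dots> = (\<Sum>k=0..N. U $ k * (b ^ k) $ n)"
    using assms(1) z by (intro sum.mono_neutral_right) auto
  finally show "(U oo b) $ n = (\<Sum>k=0..N. fps_const (U $ k) * b ^ k) $ n"
    by (simp add: fps_sum_nth)
qed



lemma fps_binomial_zero: "fps_binomial (0::complex) = 1"
  by (rule fps_ext) (simp add: gbinomial_0_left)

lemma fps_binomial_pow: "(fps_binomial (a::complex)) ^ j = fps_binomial (of_nat j * a)"
proof (induction j)
  case 0 then show ?case by (simp add: fps_binomial_zero)
next
  case (Suc j)
  have "of_nat (Suc j) * a = a + of_nat j * a" by (simp add: algebra_simps)
  then show ?case using Suc by (simp add: fps_binomial_add_mult)
qed

lemma wpow:
  fixes w :: "complex fps"
  assumes p: "p > 0" and w: "\<And>i. i < p + L \<Longrightarrow> w $ i = (if i = p then 1 else 0)"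
  shows "n < k * p + L \<Longrightarrow> (w ^ k) $ n = (if n = k * p then 1 else 0)"
proof (induction k arbitrary: n)
  case 0 then show ?case by simp
next
  case (Suc k)
  have tm: "w $ i * (w ^ k) $ (n - i) = (if i = p then (if n = Suc k * p then 1 else 0) else 0)"
    if i: "i \<in> {0..n}" for i
  proof (cases "i < p")
    case True
    then show ?thesis using w[of i] Suc.prems by auto
  next
    case False
    have "n - i < k * p + L" using False Suc.prems i by auto
    then have wk: "(w ^ k) $ (n - i) = (if n - i = k * p then 1 else 0)" by (rule Suc.IH)
    show ?thesis
    proof (cases "n - i = k * p")
      case True
      then have "i < p + L" using Suc.prems i by auto
      then show ?thesis using w[of i] wk True i by auto
    next
      case False
      then show ?thesis using wk i by auto
    qed
  qed
  have "(w ^ Suc k) $ n = (\<Sum>i=0..n. w $ i * (w ^ k) $ (n - i))"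
    by (simp add: fps_mult_nth)
  also have "\<dots> = (\<Sum>i=0..n. if i = p then (if n = Suc k * p then 1 else 0) else 0)"
    using tm by (intro sum.cong) auto
  also have "\<dots> = (if n = Suc k * p then 1 else 0)"
    using p by (subst sum.delta) auto
  finally show ?case .
qed

locale puis =
  fixes v0 v1 lam e m :: nat and y :: "complex fps"
  assumes e_pos: "e > 0" and v0_def: "v0 = 2 * e" and v1_def: "v1 = m * e"
    and m_odd: "odd m" and m3: "m \<ge> 3" and lam: "v1 < lam"
    and y_low: "\<And>i. i < v1 \<Longrightarrow> y $ i = 0" and y_v1: "y $ v1 = 1"
    and y_mid: "\<And>i. v1 < i \<Longrightarrow> i < lam \<Longrightarrow> y $ i = 0" and y_lam: "y $ lam = 1"
begin

definition "p = v1 - v0"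
definition "L = lam - v1"
definition "d = v1 + lam - v0"
definition "M = {i. e dvd i \<and> 2 * v1 - v0 \<le> i}"
definition "w = fps_shift v0 y"

lemma v0_lt_v1: "v0 < v1"
proof -
  have "2 * e < m * e" using m3 e_pos by (intro mult_strict_right_mono) auto
  then show ?thesis by (simp add: v0_def v1_def)
qed

lemma p_pos: "p > 0" using v0_lt_v1 by (simp add: p_def)
lemma L_pos: "L > 0" using lam by (simp add: L_def)
lemma e_dvd_p: "e dvd p"
proof -
  have "p = v1 - v0" by (simp add: p_def)
  also have "\<dots> = (m - 2) * e" by (simp add: v0_def v1_def diff_mult_distrib)
  finally show ?thesis by simp
qed
lemma e_dvd_v1: "e dvd v1" by (simp add: v1_def)
lemma e_dvd_v0: "e dvd v0" by (simp add: v0_def)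
lemma d_eq: "d = v1 + p + L" using v0_lt_v1 lam by (simp add: d_def p_def L_def)
lemma twov1: "2 * v1 - v0 = v1 + p" using v0_lt_v1 by (simp add: p_def)

lemma w_nth: "w $ i = y $ (i + v0)" by (simp add: w_def)

lemma w_low: "i < p + L \<Longrightarrow> w $ i = (if i = p then 1 else 0)"
proof -
  assume i: "i < p + L"
  consider "i + v0 < v1" | "i + v0 = v1" | "v1 < i + v0" by linarith
  then show ?thesis
  proof cases
    case 1 then show ?thesis using y_low[of "i + v0"] by (auto simp: w_nth p_def)
  next
    case 2 then show ?thesis using y_v1 by (auto simp: w_nth p_def)
  next
    case 3 then show ?thesis using y_mid[of "i + v0"] i v0_lt_v1 lam by (auto simp: w_nth p_def L_def)
  qed
qed

lemma w_pL: "w $ (p + L) = 1"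
  using v0_lt_v1 lam y_lam by (simp add: w_nth p_def L_def)

lemma w0: "w $ 0 = 0" using w_low[of 0] p_pos by simp

lemma wpow': "n < k * p + L \<Longrightarrow> (w ^ k) $ n = (if n = k * p then 1 else 0)"
  using wpow[OF p_pos w_low] by blast

definition Bj :: "complex \<Rightarrow> nat \<Rightarrow> complex fps" where
  "Bj \<beta> j = fps_binomial (of_nat j / of_nat v0) oo (fps_const \<beta> * w)"

definition rho :: "complex \<Rightarrow> complex fps" where
  "rho \<beta> = fps_X * Bj \<beta> 1"

lemma cw0: "(fps_const \<beta> * w) $ 0 = 0" by (simp add: w0)

lemma Bj_pow: "(Bj \<beta> 1) ^ j = Bj \<beta> j"
proof -
  have "(Bj \<beta> 1) ^ j = (fps_binomial (of_nat 1 / of_nat v0)) ^ j oo (fps_const \<beta> * w)"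
    by (simp only: Bj_def fps_compose_power[OF cw0])
  also have "\<dots> = Bj \<beta> j" by (simp add: fps_binomial_pow Bj_def)
  finally show ?thesis .
qed

lemma rho_pow: "(rho \<beta>) ^ j = fps_X ^ j * Bj \<beta> j"
  unfolding rho_def power_mult_distrib Bj_pow by (rule refl)

lemma Bj_nth: "Bj \<beta> j $ n = (\<Sum>k=0..n. (of_nat j / of_nat v0 gchoose k) * \<beta> ^ k * (w ^ k) $ n)"
  unfolding Bj_def fps_compose_nth by (simp add: power_mult_distrib fps_const_power mult.assoc)

lemma Bj_low: "n < p + L \<Longrightarrow> Bj \<beta> j $ n = (if p dvd n then (of_nat j / of_nat v0 gchoose (n div p)) * \<beta> ^ (n div p) else 0)"
proof -
  assume n: "n < p + L"
  have wk: "(w ^ k) $ n = (if n = k * p then 1 else 0)" for k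
  proof (cases k)
    case 0 then show ?thesis by simp
  next
    case (Suc k')
    then have "n < k * p + L" using n by simp
    then show ?thesis by (rule wpow')
  qed
  have "Bj \<beta> j $ n = (\<Sum>k=0..n. if k = n div p \<and> p dvd n then (of_nat j / of_nat v0 gchoose k) * \<beta> ^ k else 0)"
    unfolding Bj_nth wk using p_pos by (intro sum.cong) (auto simp: mult.commute)
  also have "\<dots> = (if p dvd n then (of_nat j / of_nat v0 gchoose (n div p)) * \<beta> ^ (n div p) else 0)"
  proof (cases "p dvd n")
    case True
    have "n div p \<le> n" by simp
    then show ?thesis using True by (simp add: sum.delta)
  qed simp
  finally show ?thesis .
qed

lemma Bj_0: "Bj \<beta> j $ 0 = 1"
  using Bj_low[of 0] p_pos L_pos by simp

lemma Bj_p: "Bj \<beta> j $ p = of_nat j / of_nat v0 * \<beta>"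
  using Bj_low[of p] p_pos L_pos by simp

lemma Bj_nz: "n < p + L \<Longrightarrow> Bj \<beta> j $ n \<noteq> 0 \<Longrightarrow> p dvd n"
  using Bj_low[of n \<beta> j] by (auto split: if_splits)

lemma Bj_pL:
  assumes nd: "\<not> p dvd (p + L)"
  shows "Bj \<beta> j $ (p + L) = of_nat j / of_nat v0 * \<beta>"
proof -
  have wk: "(w ^ k) $ (p + L) = (if k = 1 then 1 else 0)" for k
  proof (cases "k \<ge> 2")
    case True
    have "p + L < k * p + L" using True p_pos by (metis add_less_mono1 mult_1 mult_less_mono1 one_less_numeral_iff semiring_norm(76) order_less_le_trans less_2_cases_iff linorder_not_le)
    then have "(w ^ k) $ (p + L) = (if p + L = k * p then 1 else 0)" by (rule wpow')
    moreover have "p + L \<noteq> k * p" using nd by (metis dvd_triv_right)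
    ultimately show ?thesis using True by simp
  next
    case False
    then have "k = 0 \<or> k = 1" by auto
    then show ?thesis using w_pL p_pos by auto
  qed
  have "Bj \<beta> j $ (p + L) = (\<Sum>k=0..p+L. if k = 1 then (of_nat j / of_nat v0 gchoose k) * \<beta> ^ k else 0)"
    unfolding Bj_nth wk by (intro sum.cong) auto
  also have "\<dots> = of_nat j / of_nat v0 * \<beta>"
    using p_pos by (subst sum.delta) auto
  finally show ?thesis .
qed

end


context puis begin

lemma rho_pow_nth: "(rho \<beta> ^ j) $ i = (if i < j then 0 else Bj \<beta> j $ (i - j))"
  unfolding rho_pow by (simp add: fps_X_power_mult_nth)

lemma rho0: "rho \<beta> $ 0 = 0" by (simp add: rho_def)
lemma rho1: "rho \<beta> $ 1 = 1" by (simp add: rho_def Bj_0)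

lemma compose_rho_nth: "(f oo rho \<beta>) $ i = (\<Sum>j=0..i. f $ j * Bj \<beta> j $ (i - j))"
  unfolding fps_compose_nth rho_pow_nth by (intro sum.cong) auto

lemma y_nz: "y $ j \<noteq> 0 \<Longrightarrow> j = v1 \<or> lam \<le> j"
proof (rule ccontr)
  assume yj: "y $ j \<noteq> 0" and "\<not> (j = v1 \<or> lam \<le> j)"
  then have "j < v1 \<or> (v1 < j \<and> j < lam)" by auto
  then show False using yj y_low[of j] y_mid[of j] by auto
qed

lemma M_mem: "e dvd i \<Longrightarrow> v1 + p \<le> i \<Longrightarrow> i \<in> M"
  by (simp add: M_def twov1)

lemma E1:
  assumes i: "i < d" "i \<notin> M"
  shows "(y oo rho \<beta>) $ i = y $ i"
proof -
  have tm: "y $ j * Bj \<beta> j $ (i - j) = (if j = i then y $ i else 0)" if j: "j \<in> {0..i}" for j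
  proof (cases "j = i")
    case True then show ?thesis by (simp add: Bj_0)
  next
    case False
    then have ji: "j < i" using j by auto
    have "y $ j = 0 \<or> Bj \<beta> j $ (i - j) = 0"
    proof (rule ccontr)
      assume "\<not> ?thesis"
      then have yj: "y $ j \<noteq> 0" and bj: "Bj \<beta> j $ (i - j) \<noteq> 0" by auto
      from y_nz[OF yj] show False
      proof
        assume jv: "j = v1"
        have lt: "i - j < p + L" using i(1) ji d_eq jv by simp
        have pd: "p dvd (i - j)" by (rule Bj_nz[OF lt bj])
        then have "e dvd (i - j)" using e_dvd_p dvd_trans by blast
        then have ei: "e dvd i" using e_dvd_v1 jv ji by (metis dvd_add le_add_diff_inverse less_imp_le)
        have "p \<le> i - j" using pd ji p_pos by (simp add: dvd_imp_le)
        then have "i \<in> M" using M_mem[OF ei] jv ji by simp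
        then show False using i(2) by simp
      next
        assume jl: "lam \<le> j"
        have lt: "i - j < p" using i(1) jl d_eq L_def lam p_pos by arith
        then have lt2: "i - j < p + L" by simp
        have "p dvd (i - j)" by (rule Bj_nz[OF lt2 bj])
        moreover have "0 < i - j" using ji by simp
        ultimately show False using lt by (auto dest: dvd_imp_le)
      qed
    qed
    then show ?thesis using False by auto
  qed
  have "(y oo rho \<beta>) $ i = (\<Sum>j=0..i. if j = i then y $ i else 0)"
    unfolding compose_rho_nth using tm by (intro sum.cong) auto
  then show ?thesis by simp
qed

lemma E2:
  assumes nd: "\<not> e dvd d"
  shows "(y oo rho \<beta>) $ d = y $ d + \<beta> * (of_nat v1 + of_nat lam) / of_nat v0"
proof -
  have npd: "\<not> p dvd (p + L)"
  proof
    assume "p dvd (p + L)"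
    then have "e dvd (p + L)" using e_dvd_p dvd_trans by blast
    then have "e dvd d" using e_dvd_v1 d_eq by (metis dvd_add add.assoc)
    then show False using nd by simp
  qed
  have ld: "lam < d" "v1 < lam" using d_eq L_def lam p_pos by auto
  define t where "t j = y $ j * Bj \<beta> j $ (d - j)" for j
  have zero: "t j = 0" if "j \<in> {0..d} - {v1, lam, d}" for j
  proof (cases "y $ j = 0")
    case False
    then have "lam < j" "j < d" using y_nz[of j] that by auto
    then have lt: "d - j < p" "0 < d - j" using d_eq L_def lam by auto
    have "\<not> p dvd (d - j)" using lt by (auto dest: dvd_imp_le)
    then have "Bj \<beta> j $ (d - j) = 0" using Bj_nz[of "d - j" \<beta> j] lt by auto
    then show ?thesis by (simp add: t_def)
  qed (simp add: t_def)
  have "(y oo rho \<beta>) $ d = (\<Sum>j=0..d. t j)" unfolding compose_rho_nth t_def ..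
  also have "\<dots> = (\<Sum>j\<in>{v1, lam, d}. t j)"
    using zero ld by (intro sum.mono_neutral_right) auto
  also have "\<dots> = t v1 + t lam + t d" using ld by simp
  also have "t v1 = \<beta> * of_nat v1 / of_nat v0"
  proof -
    have "d - v1 = p + L" using d_eq by simp
    then show ?thesis by (simp add: t_def y_v1 Bj_pL[OF npd])
  qed
  also have "t lam = \<beta> * of_nat lam / of_nat v0"
  proof -
    have "d - lam = p" using d_eq L_def lam by simp
    then show ?thesis by (simp add: t_def y_lam Bj_p)
  qed
  also have "t d = y $ d" by (simp add: t_def Bj_0)
  finally show ?thesis by (simp add: add_divide_distrib distrib_left)
qed

lemma Dlem:
  assumes z: "z oo rho \<beta> = y"
  shows "i \<le> d \<Longrightarrow> i \<notin> M \<Longrightarrow> z $ i = y $ i - ((y oo rho \<beta>) $ i - y $ i)"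
proof (induction i rule: less_induct)
  case (less i)
  define D where "D = z - y"
  have Drho: "D oo rho \<beta> = y - (y oo rho \<beta>)"
    unfolding D_def fps_compose_sub_distrib z ..
  have tm: "D $ j * Bj \<beta> j $ (i - j) = (if j = i then D $ i else 0)" if j: "j \<in> {0..i}" for j
  proof (cases "j = i")
    case True then show ?thesis by (simp add: Bj_0)
  next
    case False
    then have ji: "j < i" using j by auto
    show ?thesis
    proof (cases "j \<in> M")
      case False
      have "z $ j = y $ j - ((y oo rho \<beta>) $ j - y $ j)" using less.IH[OF ji] less.prems ji False by simp
      moreover have "(y oo rho \<beta>) $ j = y $ j" using E1[of j \<beta>] False ji less.prems by simp
      ultimately have "D $ j = 0" by (simp add: D_def)
      then show ?thesis using ji by simp
    next
      case True
      then have ej: "e dvd j" and jge: "v1 + p \<le> j" by (auto simp: M_def twov1)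
      have "i - j \<le> L" using less.prems jge d_eq ji by simp
      then have lt: "i - j < p + L" using p_pos by simp
      have "Bj \<beta> j $ (i - j) = 0"
      proof (rule ccontr)
        assume "Bj \<beta> j $ (i - j) \<noteq> 0"
        then have "p dvd (i - j)" by (rule Bj_nz[OF lt])
        then have "e dvd (i - j)" using e_dvd_p dvd_trans by blast
        then have "e dvd i" using ej ji by (metis dvd_add le_add_diff_inverse less_imp_le)
        then have "i \<in> M" using jge ji by (intro M_mem) auto
        then show False using less.prems by simp
      qed
      then show ?thesis using ji by simp
    qed
  qed
  have "(D oo rho \<beta>) $ i = (\<Sum>j=0..i. if j = i then D $ i else 0)"
    unfolding compose_rho_nth using tm by (intro sum.cong) auto
  then have "D $ i = y $ i - (y oo rho \<beta>) $ i" using Drho by simp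
  then show ?case by (simp add: D_def algebra_simps)
qed

end


lemma mono_compose_Xpow:
  assumes "v > 0"
  shows "(fps_const (c::complex) * fps_X ^ a) oo fps_X ^ v = fps_const c * fps_X ^ (a * v)"
proof -
  have "(fps_const c * fps_X ^ a) oo fps_X ^ v = fps_const c * (fps_X ^ a oo fps_X ^ v)"
    by (simp add: fps_const_mult_apply_left)
  also have "fps_X ^ a oo (fps_X ^ v :: complex fps) = (fps_X ^ v) ^ a"
    using assms by (simp add: fps_X_power_compose)
  also have "(fps_X ^ v :: complex fps) ^ a = fps_X ^ (a * v)" by (metis power_mult mult.commute)
  finally show ?thesis .
qed

context puis begin

definition "Zf z0 U V = (U oo fps_X ^ v0) * z0 + (V oo fps_X ^ v0)"

definition "invUV U V \<longleftrightarrow> (\<forall>n>d. U $ n = 0) \<and> (\<forall>n>d. V $ n = 0) \<and> U $ 0 = 1 \<and> V $ 0 = 0 \<and> V $ 1 = 0"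

lemma elim:
  fixes z0 T :: "complex fps"
  assumes z_low: "\<And>j. j < v1 \<Longrightarrow> z0 $ j = 0" and z_v1: "z0 $ v1 = 1"
    and z_mid: "\<And>j. v1 < j \<Longrightarrow> j < lam \<Longrightarrow> j \<notin> M \<Longrightarrow> z0 $ j = 0"
    and zT: "\<And>i. i \<le> d \<Longrightarrow> i \<notin> M \<Longrightarrow> z0 $ i = T $ i"
  shows "\<exists>U V. invUV U V \<and> (\<forall>i\<le>d. Zf z0 U V $ i = T $ i)"
proof -
  have "\<exists>U V. invUV U V \<and> (\<forall>i\<le>d. (i \<notin> M \<or> i < k) \<longrightarrow> Zf z0 U V $ i = T $ i)" for k
  proof (induction k)
    case 0
    have "Zf z0 1 0 = z0" by (simp add: Zf_def)
    then show ?case using zT by (intro exI[of _ 1] exI[of _ 0]) (auto simp: invUV_def)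
  next
    case (Suc k)
    then obtain U V where inv: "invUV U V" and IH: "\<And>i. i \<le> d \<Longrightarrow> i \<notin> M \<or> i < k \<Longrightarrow> Zf z0 U V $ i = T $ i"
      by blast
    show ?case
    proof (cases "k \<in> M \<and> k \<le> d")
      case False
      then show ?thesis using inv IH by (intro exI[of _ U] exI[of _ V]) (auto simp: less_Suc_eq)
    next
      case True
      then have kM: "k \<in> M" and kd: "k \<le> d" by auto
      have ek: "e dvd k" and qge: "v1 + p \<le> k" using kM by (auto simp: M_def twov1)
      from ek obtain q where kq: "k = q * e" by (metis dvdE mult.commute)
      define c where "c = T $ k - Zf z0 U V $ k"
      have v0pos: "v0 > 0" using e_pos v0_def by simp
      have "v1 + p = 2 * v1 - v0" by (rule twov1[symmetric])
      also have "\<dots> = (2 * m - 2) * e" by (simp add: v1_def v0_def diff_mult_distrib)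
      finally have ge1: "(2 * m - 2) * e \<le> q * e" using qge kq by simp
      then have q_ge: "2 * m - 2 \<le> q" using e_pos by simp
      show ?thesis
      proof (cases "even q")
        case True
        then obtain a where qa: "q = 2 * a" by (auto elim: evenE)
        have ka: "k = a * v0" using kq qa v0_def by simp
        have "v0 < k" using qge v0_lt_v1 by simp
        then have a2: "a \<ge> 2" using ka by (metis mult_less_cancel2 mult_1 less_eq_Suc_le Suc_1)
        have "a \<le> a * v0" using v0pos by simp
        then have ad: "a \<le> d" using ka kd by linarith
        define V' where "V' = V + fps_const c * fps_X ^ a"
        have Z': "Zf z0 U V' = Zf z0 U V + fps_const c * fps_X ^ (a * v0)"
          by (simp add: Zf_def V'_def fps_compose_add_distrib mono_compose_Xpow[OF v0pos])
        have inv': "invUV U V'" using inv a2 ad by (auto simp: invUV_def V'_def)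
        have "Zf z0 U V' $ i = T $ i" if "i \<le> d" "i \<notin> M \<or> i < Suc k" for i
        proof (cases "i = k")
          case True then show ?thesis by (simp add: Z' ka c_def)
        next
          case False
          then have "Zf z0 U V $ i = T $ i" using that IH by auto
          then show ?thesis using False ka by (simp add: Z')
        qed
        then show ?thesis using inv' by blast
      next
        case False
        then have qodd: "odd q" by simp
        have qgt: "2 * m - 2 < q" using q_ge qodd by presburger
        define a where "a = (q - m) div 2"
        have "m \<le> q" using qgt m3 by simp
        then have qa: "q = 2 * a + m" using m_odd qodd unfolding a_def by presburger
        have ka: "k = a * v0 + v1" using kq qa by (simp add: v0_def v1_def algebra_simps)
        have a1: "a \<ge> 1" using qa qgt m3 by simp
        have big: "v1 < a * v0 + v0"
        proof -
          have "m < 2 * a + 2" using qa qgt by simp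
          then have "m * e < (2 * a + 2) * e" using e_pos by (intro mult_strict_right_mono) auto
          then show ?thesis by (simp add: v0_def v1_def algebra_simps)
        qed
        have "a \<le> a * v0" using v0pos by simp
        then have ad: "a \<le> d" using ka kd by linarith
        define U' where "U' = U + fps_const c * fps_X ^ a"
        have Z': "Zf z0 U' V = Zf z0 U V + fps_const c * fps_X ^ (a * v0) * z0"
          by (simp add: Zf_def U'_def fps_compose_add_distrib mono_compose_Xpow[OF v0pos] algebra_simps)
        have Z'n: "Zf z0 U' V $ i = Zf z0 U V $ i + c * (if i < a * v0 then 0 else z0 $ (i - a * v0))" for i
          by (simp add: Z' mult.assoc fps_X_power_mult_nth)
        have inv': "invUV U' V" using inv a1 ad by (auto simp: invUV_def U'_def)
        have "Zf z0 U' V $ i = T $ i" if id: "i \<le> d" and iM: "i \<notin> M \<or> i < Suc k" for i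
        proof (cases "i = k")
          case True then show ?thesis by (simp add: Z'n ka c_def z_v1)
        next
          case False
          then have Zi: "Zf z0 U V $ i = T $ i" using iM id IH by auto
          have "(if i < a * v0 then 0 else z0 $ (i - a * v0)) = 0"
          proof (cases "i < a * v0")
            case nlt: False
            define j where "j = i - a * v0"
            have ij: "i = a * v0 + j" using nlt by (simp add: j_def)
            have "z0 $ j = 0"
            proof -
              consider "j < v1" | "j = v1" | "v1 < j \<and> j < lam \<and> j \<notin> M" | "v1 < j \<and> j \<in> M" | "lam \<le> j"
                by linarith
              then show ?thesis
              proof cases
                case 1 then show ?thesis by (rule z_low)
              next
                case 2 then have "i = k" using ij ka by simp
                then show ?thesis using False by simp
              next
                case 3 then show ?thesis using z_mid by auto
              next
                case 4
                then have ej: "e dvd j" and jge: "v1 + p \<le> j" by (auto simp: M_def twov1)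
                have "e dvd a * v0" using e_dvd_v0 by simp
                then have "e dvd i" using ej ij by simp
                then have "i \<in> M" using jge ij by (intro M_mem) auto
                moreover have "k < i" using 4 ij ka by simp
                ultimately show ?thesis using iM by simp
              next
                case 5
                then have "d < i" using ij big d_def lam v0_lt_v1 by simp
                then show ?thesis using id by simp
              qed
            qed
            then show ?thesis using nlt by (simp add: j_def)
          qed simp
          then show ?thesis using Zi by (simp add: Z'n)
        qed
        then show ?thesis using inv' by blast
      qed
    qed
  qed
  from this[of "Suc d"] show ?thesis by auto
qed

end


definition s2c :: "complex fps \<Rightarrow> complex fps \<Rightarrow> complex \<Rightarrow> nat \<Rightarrow> nat \<Rightarrow> nat \<Rightarrow> complex" where
  "s2c U V \<beta> N = (\<lambda>i j. \<Sum>k\<le>N. \<Sum>l\<le>k.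
      mono2 (k - l) (Suc l) (U $ k * of_nat (k choose l) * \<beta> ^ l) i j +
      mono2 (k - l) l (V $ k * of_nat (k choose l) * \<beta> ^ l) i j)"

lemma dsum:
  fixes N i j :: nat
  shows "(\<Sum>k\<le>N. \<Sum>l\<le>k. if k - l = i \<and> l = j then f k l else 0) = (if i + j \<le> N then f (i + j) j else (0::complex))"
proof -
  have inner: "(\<Sum>l\<le>k. if k - l = i \<and> l = j then f k l else 0) = (if k = i + j then f k j else 0)" for k
  proof -
    have "(\<Sum>l\<le>k. if k - l = i \<and> l = j then f k l else 0) = (\<Sum>l\<le>k. if l = j then (if k = i + j then f k j else 0) else 0)"
    proof (intro sum.cong refl)
      fix l assume "l \<in> {..k}"
      then have "(k - l = i \<and> l = j) = (l = j \<and> k = i + j)" by auto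
      then show "(if k - l = i \<and> l = j then f k l else 0) = (if l = j then (if k = i + j then f k j else 0) else 0)"
        by auto
    qed
    also have "\<dots> = (if k = i + j then f k j else 0)" by (subst sum.delta) auto
    finally show ?thesis .
  qed
  show ?thesis unfolding inner by (subst sum.delta) auto
qed

lemma s2c_explicit:
  "s2c U V \<beta> N i j =
     (if 1 \<le> j \<and> i + j - 1 \<le> N then U $ (i + j - 1) * of_nat ((i + j - 1) choose (j - 1)) * \<beta> ^ (j - 1) else 0) +
     (if i + j \<le> N then V $ (i + j) * of_nat ((i + j) choose j) * \<beta> ^ j else 0)"
proof -
  have A: "(\<Sum>k\<le>N. \<Sum>l\<le>k. mono2 (k - l) (Suc l) (U $ k * of_nat (k choose l) * \<beta> ^ l) i j) =
     (if 1 \<le> j \<and> i + j - 1 \<le> N then U $ (i + j - 1) * of_nat ((i + j - 1) choose (j - 1)) * \<beta> ^ (j - 1) else 0)"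
  proof (cases j)
    case 0 then show ?thesis by (simp add: mono2_def)
  next
    case (Suc j')
    have "(\<Sum>k\<le>N. \<Sum>l\<le>k. mono2 (k - l) (Suc l) (U $ k * of_nat (k choose l) * \<beta> ^ l) i j) =
       (\<Sum>k\<le>N. \<Sum>l\<le>k. if k - l = i \<and> l = j' then U $ k * of_nat (k choose l) * \<beta> ^ l else 0)"
      unfolding mono2_def Suc by (intro sum.cong) auto
    also have "\<dots> = (if i + j' \<le> N then U $ (i + j') * of_nat ((i + j') choose j') * \<beta> ^ j' else 0)"
      by (rule dsum)
    finally show ?thesis using Suc by simp
  qed
  have B: "(\<Sum>k\<le>N. \<Sum>l\<le>k. mono2 (k - l) l (V $ k * of_nat (k choose l) * \<beta> ^ l) i j) =
     (if i + j \<le> N then V $ (i + j) * of_nat ((i + j) choose j) * \<beta> ^ j else 0)"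
  proof -
    have "(\<Sum>k\<le>N. \<Sum>l\<le>k. mono2 (k - l) l (V $ k * of_nat (k choose l) * \<beta> ^ l) i j) =
       (\<Sum>k\<le>N. \<Sum>l\<le>k. if k - l = i \<and> l = j then V $ k * of_nat (k choose l) * \<beta> ^ l else 0)"
      unfolding mono2_def by (intro sum.cong) auto
    also have "\<dots> = (if i + j \<le> N then V $ (i + j) * of_nat ((i + j) choose j) * \<beta> ^ j else 0)" by (rule dsum)
    finally show ?thesis .
  qed
  show ?thesis unfolding s2c_def sum.distrib A B ..
qed

lemma s2c_conv2: "conv2 (s2c U V \<beta> N)"
  by (rule conv2_finite[of "Suc N"]) (auto simp: s2c_explicit)

lemma comp2_s2c:
  fixes x y U V :: "complex fps"
  assumes x0: "x $ 0 = 0" and y0: "y $ 0 = 0"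
    and U: "\<And>k. N < k \<Longrightarrow> U $ k = 0" and V: "\<And>k. N < k \<Longrightarrow> V $ k = 0"
  shows "comp2 (s2c U V \<beta> N) x y = (U oo (x + fps_const \<beta> * y)) * y + (V oo (x + fps_const \<beta> * y))"
proof -
  let ?t = "x + fps_const \<beta> * y"
  have t0: "?t $ 0 = 0" using x0 y0 by simp
  have pw: "?t ^ k = (\<Sum>l\<le>k. fps_const (of_nat (k choose l) * \<beta> ^ l) * x ^ (k - l) * y ^ l)" for k
  proof -
    have "?t ^ k = (fps_const \<beta> * y + x) ^ k" by (simp add: add.commute)
    also have "\<dots> = (\<Sum>l\<le>k. of_nat (k choose l) * (fps_const \<beta> * y) ^ l * x ^ (k - l))"
      by (rule binomial_ring)
    also have "\<dots> = (\<Sum>l\<le>k. fps_const (of_nat (k choose l) * \<beta> ^ l) * x ^ (k - l) * y ^ l)"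
      by (intro sum.cong) (simp_all add: power_mult_distrib fps_of_nat[symmetric] mult_ac)
    finally show ?thesis .
  qed
  have cU: "U oo ?t = (\<Sum>k\<le>N. fps_const (U $ k) * ?t ^ k)"
    using compose_poly[OF U t0] by (simp add: atLeast0AtMost)
  have cV: "V oo ?t = (\<Sum>k\<le>N. fps_const (V $ k) * ?t ^ k)"
    using compose_poly[OF V t0] by (simp add: atLeast0AtMost)
  have "comp2 (s2c U V \<beta> N) x y = (\<Sum>k\<le>N. \<Sum>l\<le>k.
      fps_const (U $ k * of_nat (k choose l) * \<beta> ^ l) * x ^ (k - l) * y ^ Suc l +
      fps_const (V $ k * of_nat (k choose l) * \<beta> ^ l) * x ^ (k - l) * y ^ l)"
    unfolding s2c_def by (simp add: comp2_sum comp2_add comp2_mono2[OF x0 y0])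
  also have "\<dots> = (\<Sum>k\<le>N. fps_const (U $ k) * ?t ^ k) * y + (\<Sum>k\<le>N. fps_const (V $ k) * ?t ^ k)"
    unfolding pw sum.distrib sum_distrib_left sum_distrib_right
    by (intro arg_cong2[where f="(+)"] sum.cong refl) (simp_all add: mult_ac)
  finally show ?thesis using cU cV by simp
qed



context puis begin

lemma d_ge: "v1 + p \<le> d" using d_eq by simp
lemma lam_lt_d: "lam < d" using d_eq L_def lam p_pos by simp

lemma main_equiv:
  assumes yconv: "conv1 y"
  shows "\<exists>y1. (\<forall>i\<le>d. y1 $ i = (if i = d then 0 else y $ i)) \<and> A_equiv (fps_X ^ v0, y) (fps_X ^ v0, y1)"
proof -
  define T :: "complex fps" where "T = Abs_fps (\<lambda>i. if i = d then 0 else y $ i)"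
  define \<beta> :: complex where "\<beta> = (if e dvd d then 0 else of_nat v0 * y $ d / (of_nat v1 + of_nat lam))"
  define r where "r = rho \<beta>"
  define z0 where "z0 = y oo fps_inv r"
  have r0: "r $ 0 = 0" by (simp add: r_def rho0)
  have r1: "r $ 1 = 1" unfolding r_def by (rule rho1)
  have inv0: "fps_inv r $ 0 = 0" by (simp add: fps_inv_def)
  have z0r: "z0 oo r = y"
    unfolding z0_def using fps_compose_assoc[OF r0 inv0, of y] fps_inv[OF r0] r1 by simp
  have v0pos: "v0 > 0" using e_pos v0_def by simp
  have zT: "z0 $ i = T $ i" if "i \<le> d" "i \<notin> M" for i
  proof -
    have zi: "z0 $ i = y $ i - ((y oo rho \<beta>) $ i - y $ i)"
      using Dlem[of z0 \<beta> i] z0r that by (simp add: r_def)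
    show ?thesis
    proof (cases "i = d")
      case False
      then have "i < d" using that by simp
      then show ?thesis using zi E1[of i \<beta>] that False by (simp add: T_def)
    next
      case True
      then have nd: "\<not> e dvd d" using that d_ge by (auto intro: M_mem)
      have ne: "of_nat v1 + of_nat lam \<noteq> (0::complex)"
        using lam by (metis add_gr_0 less_nat_zero_code neq0_conv of_nat_add of_nat_eq_0_iff)
      have "z0 $ d = y $ d - \<beta> * (of_nat v1 + of_nat lam) / of_nat v0"
        using zi E2[OF nd, of \<beta>] True by simp
      also have "\<dots> = 0" using nd ne v0pos by (simp add: \<beta>_def)
      finally show ?thesis using True by (simp add: T_def)
    qed
  qed
  have nM: "i \<notin> M" if "i < v1 + p" for i using that by (auto simp: M_def twov1)
  have z_low: "z0 $ j = 0" if "j < v1" for j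
    using zT[of j] nM[of j] that y_low[of j] d_ge by (simp add: T_def)
  have z_v1: "z0 $ v1 = 1"
    using zT[of v1] nM[of v1] p_pos y_v1 d_ge by (simp add: T_def)
  have z_mid: "z0 $ j = 0" if "v1 < j" "j < lam" "j \<notin> M" for j
    using zT[of j] that y_mid[of j] lam_lt_d by (simp add: T_def)
  obtain U V where inv: "invUV U V" and ZT: "\<forall>i\<le>d. Zf z0 U V $ i = T $ i"
    using elim[of z0 T, OF z_low z_v1 z_mid zT] by blast
  from inv have Ud: "\<And>k. d < k \<Longrightarrow> U $ k = 0" and Vd: "\<And>k. d < k \<Longrightarrow> V $ k = 0"
    and U0: "U $ 0 = 1" and V0: "V $ 0 = 0" and V1: "V $ 1 = 0" by (auto simp: invUV_def)
  define y1 where "y1 = Zf z0 U V"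
  define x :: "complex fps" where "x = fps_X ^ v0"
  define s1 where "s1 = (\<lambda>i j. mono2 1 0 1 i j + mono2 0 1 \<beta> i j)"
  define s2 where "s2 = s2c U V \<beta> d"
  have x0: "x $ 0 = 0" using v0pos by (simp add: x_def)
  have y0: "y $ 0 = 0" using y_low[of 0] v0_lt_v1 by simp
  have xr: "x oo r = x + fps_const \<beta> * y"
  proof -
    have "x oo r = r ^ v0" unfolding x_def by (rule fps_X_power_compose[OF r0])
    also have "\<dots> = fps_X ^ v0 * Bj \<beta> v0" unfolding r_def by (rule rho_pow)
    also have "Bj \<beta> v0 = 1 + fps_const \<beta> * w"
    proof -
      have "of_nat v0 / of_nat v0 = (1::complex)" using v0pos by simp
      then have "Bj \<beta> v0 = (1 + fps_X) oo (fps_const \<beta> * w)" by (simp add: Bj_def fps_binomial_1)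
      also have "\<dots> = 1 + fps_const \<beta> * w" by (simp add: fps_compose_add_distrib fps_X_fps_compose_startby0[OF cw0])
      finally show ?thesis .
    qed
    also have "fps_X ^ v0 * (1 + fps_const \<beta> * w) = x + fps_const \<beta> * (fps_X ^ v0 * w)"
      by (simp add: x_def algebra_simps)
    also have "fps_X ^ v0 * w = y"
    proof (rule fps_ext)
      fix n show "(fps_X ^ v0 * w) $ n = y $ n"
        using y_low[of n] v0_lt_v1 by (simp add: fps_X_power_mult_nth w_nth)
    qed
    finally show ?thesis .
  qed
  have fst_eq: "fps_X ^ v0 oo r = comp2 s1 (fps_X ^ v0) y"
    using xr unfolding s1_def comp2_add comp2_mono2[OF x0 y0, unfolded x_def] by (simp add: x_def)
  have snd_eq: "y1 oo r = comp2 s2 (fps_X ^ v0) y"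
  proof -
    have "y1 oo r = ((U oo x) oo r) * (z0 oo r) + ((V oo x) oo r)"
      unfolding y1_def Zf_def x_def[symmetric] by (simp add: fps_compose_add_distrib fps_compose_mult_distrib[OF r0])
    also have "\<dots> = (U oo (x + fps_const \<beta> * y)) * y + (V oo (x + fps_const \<beta> * y))"
      using fps_compose_assoc[OF r0 x0, of U] fps_compose_assoc[OF r0 x0, of V] z0r xr by simp
    also have "\<dots> = comp2 s2 x y"
      unfolding s2_def by (rule comp2_s2c[OF x0 y0 Ud Vd, symmetric])
    finally show ?thesis by (simp add: x_def)
  qed
  have conv_r: "conv1 r"
  proof -
    have "conv1 (fps_binomial (complex_of_real (1 / real v0)))"
      using v0pos by (intro conv1_binomial) auto
    moreover have "complex_of_real (1 / real v0) = of_nat 1 / of_nat v0" by simp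
    ultimately have "conv1 (fps_binomial (of_nat 1 / of_nat v0))" by simp
    moreover have "conv1 (fps_const \<beta> * w)" unfolding w_def by (intro conv1_cmult conv1_shift yconv)
    ultimately have "conv1 (Bj \<beta> 1)" unfolding Bj_def by (rule conv1_compose)
    then show ?thesis unfolding r_def rho_def by (rule conv1_X_mult)
  qed
  have d1: "1 \<le> d" using d_ge p_pos by simp
  have cs1: "conv2 s1" by (rule conv2_finite[of 1]) (auto simp: s1_def mono2_def)
  have A: "A_equiv (fps_X ^ v0, y) (fps_X ^ v0, y1)"
    unfolding A_equiv_def
    apply (rule exI[of _ s1], rule exI[of _ s2], rule exI[of _ r], rule exI[of _ \<beta>])
    using fst_eq snd_eq conv_r r0 r1 d1 U0 V0 V1 cs1 s2c_conv2[of U V \<beta> d]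
    by (simp add: s1_def s2_def mono2_def s2c_explicit)
  have "\<forall>i\<le>d. y1 $ i = (if i = d then 0 else y $ i)"
    using ZT by (simp add: y1_def T_def)
  then show ?thesis using A by blast
qed

end


theorem proposition5p1:
  fixes v0 v1 lam :: nat and y :: "complex fps"
  assumes "puiseux_param v0 v1 y"
    and "genus (fps_X ^ v0) y \<ge> 2"
    and "v0 div gcd v0 v1 = 2"
    and "zariski_exists (fps_X ^ v0) y"
    and "lam = zariski_inv v0 (fps_X ^ v0) y"
    and "v1 < lam"
    and "\<forall>i. v1 < i \<and> i < lam \<longrightarrow> fps_nth y i = 0"
    and "fps_nth y lam = 1"
  shows "\<exists>y1 :: complex fps.
           (\<forall>i<lam. i \<noteq> v1 \<longrightarrow> fps_nth y1 i = 0) \<and> fps_nth y1 v1 = 1 \<and> fps_nth y1 lam = 1 \<and>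
           (\<forall>i. i < v1 + lam - v0 \<longrightarrow> fps_nth y1 i = fps_nth y i) \<and>
           fps_nth y1 (v1 + lam - v0) = 0 \<and>
           A_equiv (fps_X ^ v0, y) (fps_X ^ v0, y1)"
proof -
  from assms(1) have yconv: "conv1 y" and ylow: "\<And>i. i < v1 \<Longrightarrow> y $ i = 0" and yv1: "y $ v1 = 1"
    and v01: "v0 < v1"
    unfolding puiseux_param_def by auto
  define e where "e = gcd v0 v1"
  define m where "m = v1 div e"
  have e_pos: "e > 0" using assms(3) unfolding e_def by (metis div_by_0 gr0I zero_neq_numeral)
  have v0e: "v0 = 2 * e"
    using assms(3) unfolding e_def by (metis dvd_mult_div_cancel gcd_dvd1 mult.commute)
  have v1e: "v1 = m * e" unfolding m_def e_def by simp
  have h: "gcd v0 v1 = e * gcd 2 m" unfolding v0e v1e by (simp add: gcd_mult_distrib_nat mult.commute)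
  have g: "e * gcd 2 m = e * 1" using h e_def by (metis mult_1_right)
  then have "gcd 2 m = 1" using e_pos by (metis mult_left_cancel neq0_conv)
  then have modd: "odd m" by (metis dvd_refl gcd_nat.absorb1 numeral_One num.distinct(1) numeral_eq_iff gcd_greatest_iff)
  have "2 * e < m * e" using v01 v0e v1e by simp
  then have m3: "m \<ge> 3" using e_pos modd by (metis Suc_leI mult_less_cancel2 numeral_2_eq_2 numeral_3_eq_3 dvd_refl odd_numeral Suc_lessI)
  interpret P: puis v0 v1 lam e m y
    by unfold_locales (use e_pos v0e v1e modd m3 assms(6,7,8) ylow yv1 in auto)
  obtain y1 where y1: "\<forall>i\<le>P.d. y1 $ i = (if i = P.d then 0 else y $ i)"
    and A: "A_equiv (fps_X ^ v0, y) (fps_X ^ v0, y1)"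
    using P.main_equiv[OF yconv] by blast
  have dd: "P.d = v1 + lam - v0" by (simp add: P.d_def)
  have ld: "lam < P.d" by (rule P.lam_lt_d)
  have agree: "y1 $ i = y $ i" if "i < P.d" for i using y1 that by auto
  show ?thesis
  proof (intro exI[of _ y1] conjI allI impI)
    fix i assume "i < lam" "i \<noteq> v1"
    then show "y1 $ i = 0" using agree[of i] ld ylow[of i] assms(7) by (cases "i < v1") auto
  next
    show "y1 $ v1 = 1" using agree[of v1] ld assms(6) yv1 by simp
  next
    show "y1 $ lam = 1" using agree[of lam] ld assms(8) by simp
  next
    fix i assume "i < v1 + lam - v0" then show "y1 $ i = y $ i" using agree dd by simp
  next
    show "y1 $ (v1 + lam - v0) = 0" using y1 dd by simp
  next
    show "A_equiv (fps_X ^ v0, y) (fps_X ^ v0, y1)" by (rule A)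
  qed
qed


end
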